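(* Let $X$ be a Banach space with a normalized $1$-unconditional basis $(e_i)_{i=1}^\infty$. There exists $P\subseteq\mathbb{N}$ such that for all $k\in\mathbb{N}$, \[\psi_P(k)\geq\tfrac12(\psi(k)-1).\]
   Context: Identify finitely supported real sequences with elements of $X$ via $e_i$; for finite $A\subseteq\mathbb{N}$, $1_A=\sum_{i\in A}e_i$. Define $\psi(k)=\|1_{[1,k]}\|_X$ and, for $P\subseteq\mathbb{N}$ with complement $P^c=\mathbb{N}\setminus P$, $\psi_P(k)=\min\{\|1_{[1,k]\cap P}\|_X,\|1_{[1,k]\cap P^c}\|_X\}$. Normalized means $\|e_i\|_X=1$; $1$-unconditional means $\|\sum_{i=1}^n a_ie_i\|_X\le\|\sum_{i=1}^n b_ie_i\|_X$ whenever $|a_i|\le|b_i|$ for all $i$. (Standing assumption in the paper: the basis is not equivalent to the standard basis of $c_0$.) *)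

theory Defs
  imports "HOL-Analysis.Analysis"
begin

text \<open>A (Schauder) basis e_1, e_2, ... of a Banach space (index 0 unused):
  every x has a unique coefficient sequence a (with a 0 = 0) such that
  the partial sums sum_{i=1}^n a_i e_i converge to x.\<close>
definition schauder_basis :: "(nat \<Rightarrow> 'a::banach) \<Rightarrow> bool" where
  "schauder_basis e \<longleftrightarrow>
     (\<forall>x. \<exists>!a::nat \<Rightarrow> real. a 0 = 0 \<and> (\<lambda>n. \<Sum>i=1..n. a i *\<^sub>R e i) \<longlonglongrightarrow> x)"

definition normalized_basis :: "(nat \<Rightarrow> 'a::real_normed_vector) \<Rightarrow> bool" where
  "normalized_basis e \<longleftrightarrow> (\<forall>i\<ge>1. norm (e i) = 1)"

definition one_unconditional :: "(nat \<Rightarrow> 'a::real_normed_vector) \<Rightarrow> bool" where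
  "one_unconditional e \<longleftrightarrow>
     (\<forall>n (a::nat \<Rightarrow> real) b. (\<forall>i\<in>{1..n}. \<bar>a i\<bar> \<le> \<bar>b i\<bar>) \<longrightarrow>
        norm (\<Sum>i=1..n. a i *\<^sub>R e i) \<le> norm (\<Sum>i=1..n. b i *\<^sub>R e i))"

definition ind :: "(nat \<Rightarrow> 'a::real_normed_vector) \<Rightarrow> nat set \<Rightarrow> 'a" where
  "ind e A = (\<Sum>i\<in>A. e i)"

definition psi :: "(nat \<Rightarrow> 'a::real_normed_vector) \<Rightarrow> nat \<Rightarrow> real" where
  "psi e k = norm (ind e {1..k})"

definition psiP :: "(nat \<Rightarrow> 'a::real_normed_vector) \<Rightarrow> nat set \<Rightarrow> nat \<Rightarrow> real" where
  "psiP e P k = min (norm (ind e ({1..k} \<inter> P))) (norm (ind e ({1..k} \<inter> ({1..} - P))))"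

end

theory Submission
  imports Defs
begin

lemma ind_as_sum:
  fixes e :: "nat \<Rightarrow> 'a::real_normed_vector"
  assumes "S \<subseteq> {1..m}"
  shows "(\<Sum>j=1..m. (if j \<in> S then 1 else 0) *\<^sub>R e j) = ind e S"
proof -
  have "(\<Sum>j=1..m. (if j \<in> S then 1 else 0) *\<^sub>R e j) = (\<Sum>j=1..m. if j \<in> S then e j else 0)"
    by (rule sum.cong) auto
  also have "\<dots> = sum e ({1..m} \<inter> S)" by (simp add: sum.inter_restrict)
  also have "{1..m} \<inter> S = S" using assms by auto
  finally show ?thesis by (simp add: ind_def)
qed

lemma ind_insert_bounds:
  fixes e :: "nat \<Rightarrow> 'a::real_normed_vector"
  assumes nb: "normalized_basis e" and uc: "one_unconditional e"
    and S: "S \<subseteq> {1..m}" and i: "i \<in> {1..m}" and ni: "i \<notin> S"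
  shows "norm (ind e S) \<le> norm (ind e (insert i S))"
    "norm (ind e (insert i S)) \<le> norm (ind e S) + 1"
proof -
  have fin: "finite S" using S finite_subset by blast
  have eq: "ind e (insert i S) = e i + ind e S" using fin ni by (simp add: ind_def)
  have "norm (e i) = 1" using nb i by (simp add: normalized_basis_def)
  then show "norm (ind e (insert i S)) \<le> norm (ind e S) + 1"
    using eq norm_triangle_ineq[of "e i" "ind e S"] by simp
  have S2: "insert i S \<subseteq> {1..m}" using S i by auto
  have "norm (\<Sum>j=1..m. (if j \<in> S then 1 else 0) *\<^sub>R e j)
      \<le> norm (\<Sum>j=1..m. (if j \<in> insert i S then 1 else 0) *\<^sub>R e j)"
    using uc unfolding one_unconditional_def by (erule_tac x=m in allE) auto
  then show "norm (ind e S) \<le> norm (ind e (insert i S))"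
    using ind_as_sum[OF S, of e] ind_as_sum[OF S2, of e] by simp
qed

context
  fixes e :: "nat \<Rightarrow> 'a::real_normed_vector"
begin

fun f :: "nat \<Rightarrow> nat set" where
  "f 0 = {}"
| "f (Suc n) = (if norm (ind e (f n)) \<le> norm (ind e ({1..n} - f n))
                 then insert (Suc n) (f n) else f n)"

lemma f_sub: "f n \<subseteq> {1..n}"
  by (induction n) auto

lemma f_restrict: "m \<le> k \<Longrightarrow> f k \<inter> {1..m} = f m"
proof (induction k)
  case 0 then show ?case by simp
next
  case (Suc k)
  show ?case
  proof (cases "m = Suc k")
    case True then show ?thesis using f_sub[of "Suc k"] by auto
  next
    case False
    then have "m \<le> k" using Suc.prems by simp
    have "f (Suc k) \<inter> {1..m} = f k \<inter> {1..m}"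
      using \<open>m \<le> k\<close> by (auto split: if_splits)
    then show ?thesis using Suc.IH \<open>m \<le> k\<close> by simp
  qed
qed

lemma f_diff:
  assumes nb: "normalized_basis e" and uc: "one_unconditional e"
  shows "\<bar>norm (ind e (f k)) - norm (ind e ({1..k} - f k))\<bar> \<le> 1"
proof (induction k)
  case 0 then show ?case by (simp add: ind_def)
next
  case (Suc n)
  let ?A = "f n" and ?B = "{1..n} - f n"
  have sA: "?A \<subseteq> {1..Suc n}" using f_sub[of n] by auto
  have sB: "?B \<subseteq> {1..Suc n}" by auto
  have i: "Suc n \<in> {1..Suc n}" by simp
  have nA: "Suc n \<notin> ?A" using f_sub[of n] by auto
  have nB: "Suc n \<notin> ?B" by auto
  show ?case
  proof (cases "norm (ind e ?A) \<le> norm (ind e ?B)")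
    case True
    have B': "{1..Suc n} - insert (Suc n) ?A = ?B" by auto
    have "f (Suc n) = insert (Suc n) ?A" using True by simp
    then show ?thesis using True B' ind_insert_bounds[OF nb uc sA i nA] Suc.IH
      by (simp only: abs_le_iff) linarith
  next
    case False
    have B': "{1..Suc n} - ?A = insert (Suc n) ?B" using f_sub[of n] by auto
    have "f (Suc n) = ?A" using False by simp
    then show ?thesis using False B' ind_insert_bounds[OF nb uc sB i nB] Suc.IH
      by (simp only: abs_le_iff) linarith
  qed
qed

end

theorem lemma3p1:
  fixes e :: "nat \<Rightarrow> 'a::banach"
  assumes "schauder_basis e"
    and "normalized_basis e"
    and "one_unconditional e"
  shows "\<exists>P \<subseteq> {1..}. \<forall>k\<ge>1. psiP e P k \<ge> (psi e k - 1) / 2"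
proof -
  define P where "P = {n. n \<ge> 1 \<and> n \<in> f e n}"
  have PI: "{1..k} \<inter> P = f e k" for k
  proof
    show "{1..k} \<inter> P \<subseteq> f e k"
    proof
      fix i assume "i \<in> {1..k} \<inter> P"
      then have "i \<le> k" "i \<in> f e i" by (auto simp: P_def)
      then show "i \<in> f e k" using f_restrict[where e=e and m=i and k=k] by auto
    qed
    show "f e k \<subseteq> {1..k} \<inter> P"
    proof
      fix i assume i: "i \<in> f e k"
      then have "i \<in> {1..k}" using f_sub[where e=e and n=k] by auto
      then have ik: "i \<le> k" "1 \<le> i" by auto
      have eq: "f e k \<inter> {1..i} = f e i" using f_restrict[where e=e and m=i and k=k] ik(1) .
      have "i \<in> f e k \<inter> {1..i}" using i ik(2) by simp
      then have "i \<in> f e i" unfolding eq .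
      then show "i \<in> {1..k} \<inter> P" using \<open>i \<in> {1..k}\<close> by (auto simp: P_def)
    qed
  qed
  have PC: "{1..k} \<inter> ({1..} - P) = {1..k} - f e k" for k
  proof -
    have "{1..k} \<inter> ({1..} - P) = {1..k} - ({1..k} \<inter> P)" by auto
    then show ?thesis unfolding PI .
  qed
  have "psiP e P k \<ge> (psi e k - 1) / 2" for k
  proof -
    let ?A = "f e k" and ?B = "{1..k} - f e k"
    have "ind e {1..k} = ind e ?B + ind e ?A"
      unfolding ind_def by (rule sum.subset_diff[OF f_sub[where e=e and n=k]]) simp
    then have "psi e k \<le> norm (ind e ?A) + norm (ind e ?B)"
      unfolding psi_def using norm_triangle_ineq[of "ind e ?B" "ind e ?A"] by simp
    moreover have "\<bar>norm (ind e ?A) - norm (ind e ?B)\<bar> \<le> 1"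
      using f_diff[OF assms(2,3)] by blast
    ultimately show ?thesis unfolding psiP_def PI PC min_def abs_le_iff by simp
  qed
  moreover have "P \<subseteq> {1..}" by (auto simp: P_def)
  ultimately show ?thesis by blast
qed

end
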